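(* Let $S\subseteq\mathbb{N}^d$ be a GNS. Then $\tau(S)\le t(S)$, and $\tau(S)=t(S)$ holds if and only if for every $x\in\mathcal{H}(S)$ there exists a Frobenius allowable gap $F$ of $S$ with $F-x\in S$.
   Context: $\mathbb{N}=\{0,1,2,\dots\}$. A GNS is a submonoid $S\subseteq\mathbb{N}^d$ with finite complement $\mathcal{H}(S)=\mathbb{N}^d\setminus S$ (gaps). A relaxed monomial order is a total order $\prec$ on $\mathbb{N}^d$ with (i) $v\prec w\Rightarrow v\prec w+u$ for all $u\in\mathbb{N}^d$, (ii) $0\prec v$ for all $v\neq 0$. A gap is Frobenius allowable if it equals $\max_\prec\mathcal{H}(S)$ for some relaxed monomial order $\prec$; $FA(S)$ denotes the set of Frobenius allowable gaps and $\tau(S)=|FA(S)|$. A gap $P$ is pseudo-Frobenius if $P+s\in S$ for all nonzero $s\in S$; $PF(S)$ is the set of these and $t(S)=|PF(S)|$ is the type. The condition $F-x\in S$ means $F-x\in\mathbb{N}^d$ and lies in $S$. *)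

theory Defs
  imports Main
begin

text \<open>Elements of N^d are modelled as functions 'd => nat, where the dimension d is
  the cardinality of a finite index type 'd. Addition is componentwise.\<close>

definition vadd :: "('d \<Rightarrow> nat) \<Rightarrow> ('d \<Rightarrow> nat) \<Rightarrow> ('d \<Rightarrow> nat)" where
  "vadd v w = (\<lambda>i. v i + w i)"

definition vzero :: "'d \<Rightarrow> nat" where
  "vzero = (\<lambda>i. 0)"

definition GNS :: "('d::finite \<Rightarrow> nat) set \<Rightarrow> bool" where
  "GNS S \<longleftrightarrow> vzero \<in> S \<and> (\<forall>v\<in>S. \<forall>w\<in>S. vadd v w \<in> S) \<and> finite (UNIV - S)"

definition gaps :: "('d \<Rightarrow> nat) set \<Rightarrow> ('d \<Rightarrow> nat) set" where
  "gaps S = UNIV - S"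

definition relaxed_monomial_order :: "(('d \<Rightarrow> nat) \<Rightarrow> ('d \<Rightarrow> nat) \<Rightarrow> bool) \<Rightarrow> bool" where
  "relaxed_monomial_order lt \<longleftrightarrow>
     (\<forall>v. \<not> lt v v) \<and>
     (\<forall>u v w. lt u v \<longrightarrow> lt v w \<longrightarrow> lt u w) \<and>
     (\<forall>v w. v \<noteq> w \<longrightarrow> lt v w \<or> lt w v) \<and>
     (\<forall>u v w. lt v w \<longrightarrow> lt v (vadd w u)) \<and>
     (\<forall>v. v \<noteq> vzero \<longrightarrow> lt vzero v)"

definition is_max_wrt :: "('a \<Rightarrow> 'a \<Rightarrow> bool) \<Rightarrow> 'a set \<Rightarrow> 'a \<Rightarrow> bool" where
  "is_max_wrt lt A F \<longleftrightarrow> F \<in> A \<and> (\<forall>x\<in>A. x \<noteq> F \<longrightarrow> lt x F)"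

definition frobenius_allowable :: "('d \<Rightarrow> nat) set \<Rightarrow> ('d \<Rightarrow> nat) set" where
  "frobenius_allowable S =
     {F. \<exists>lt. relaxed_monomial_order lt \<and> is_max_wrt lt (gaps S) F}"

definition tau :: "('d \<Rightarrow> nat) set \<Rightarrow> nat" where
  "tau S = card (frobenius_allowable S)"

definition pseudo_frobenius :: "('d \<Rightarrow> nat) set \<Rightarrow> ('d \<Rightarrow> nat) set" where
  "pseudo_frobenius S = {P \<in> gaps S. \<forall>s\<in>S. s \<noteq> vzero \<longrightarrow> vadd P s \<in> S}"

definition type_gns :: "('d \<Rightarrow> nat) set \<Rightarrow> nat" where
  "type_gns S = card (pseudo_frobenius S)"

text \<open>F - x lies in S: F - x is in N^d (x <= F componentwise) and belongs to S.\<close>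
definition diff_in :: "('d \<Rightarrow> nat) \<Rightarrow> ('d \<Rightarrow> nat) \<Rightarrow> ('d \<Rightarrow> nat) set \<Rightarrow> bool" where
  "diff_in F x S \<longleftrightarrow> (\<forall>i. x i \<le> F i) \<and> (\<lambda>i. F i - x i) \<in> S"

end

theory Submission
  imports Defs
begin

lemma vadd_eq_self: "vadd F s = F \<Longrightarrow> s = vzero"
  unfolding vadd_def vzero_def by (rule ext) (drule fun_cong, simp)

lemma FA_sub_PF:
  assumes "GNS S"
  shows "frobenius_allowable S \<subseteq> pseudo_frobenius S"
proof
  fix F assume "F \<in> frobenius_allowable S"
  then obtain lt where r: "relaxed_monomial_order lt" and m: "is_max_wrt lt (gaps S) F"
    unfolding frobenius_allowable_def by blast
  have Fg: "F \<in> gaps S" using m unfolding is_max_wrt_def by blast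
  have "vadd F s \<in> S" if "s \<in> S" "s \<noteq> vzero" for s
  proof (rule ccontr)
    assume "vadd F s \<notin> S"
    hence g: "vadd F s \<in> gaps S" unfolding gaps_def by blast
    have "vadd F s \<noteq> F" using that vadd_eq_self by blast
    hence "lt (vadd F s) F" using m g unfolding is_max_wrt_def by blast
    hence "lt (vadd F s) (vadd F s)" using r unfolding relaxed_monomial_order_def by blast
    thus False using r unfolding relaxed_monomial_order_def by blast
  qed
  thus "F \<in> pseudo_frobenius S" using Fg unfolding pseudo_frobenius_def by blast
qed

lemma exists_PF:
  fixes S :: "('d::finite \<Rightarrow> nat) set"
  assumes G: "GNS S" and x: "x \<in> gaps S"
  shows "\<exists>P\<in>pseudo_frobenius S. diff_in P x S"
proof -
  define A where "A = {y \<in> gaps S. diff_in y x S}"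
  have fin: "finite A"
  proof (rule finite_subset)
    show "A \<subseteq> UNIV - S" unfolding A_def gaps_def by blast
    show "finite (UNIV - S)" using G unfolding GNS_def by blast
  qed
  have "(\<lambda>i. x i - x i) = vzero" unfolding vzero_def by auto
  hence "x \<in> A" using x G unfolding A_def diff_in_def GNS_def by auto
  define f where "f = (\<lambda>y::'d\<Rightarrow>nat. sum y UNIV)"
  define M where "M = Max (f ` A)"
  have "M \<in> f ` A" unfolding M_def using fin \<open>x \<in> A\<close> by (intro Max_in) auto
  then obtain y where yA: "y \<in> A" and yM: "f y = M" by auto
  have ymax: "f z \<le> f y" if "z \<in> A" for z using that fin yM unfolding M_def by auto
  have "vadd y s \<in> S" if s: "s \<in> S" "s \<noteq> vzero" for s
  proof (rule ccontr)
    assume ns: "vadd y s \<notin> S"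
    have d: "(\<forall>i. x i \<le> y i) \<and> (\<lambda>i. y i - x i) \<in> S" using yA unfolding A_def diff_in_def by auto
    have eq: "(\<lambda>i. vadd y s i - x i) = vadd (\<lambda>i. y i - x i) s"
      using d unfolding vadd_def by (auto intro!: ext)
    have "vadd (\<lambda>i. y i - x i) s \<in> S" using G d s unfolding GNS_def by blast
    hence "vadd y s \<in> A" using ns d eq unfolding A_def gaps_def diff_in_def
      by (auto simp: vadd_def trans_le_add1)
    hence le: "f (vadd y s) \<le> f y" by (rule ymax)
    obtain i where "s i \<noteq> 0" using s(2) unfolding vzero_def by auto
    hence "sum s UNIV > 0" by (metis finite UNIV_I gr0I sum_eq_0_iff)
    moreover have "f (vadd y s) = f y + sum s UNIV" unfolding f_def vadd_def by (simp add: sum.distrib)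
    ultimately show False using le by simp
  qed
  hence "y \<in> pseudo_frobenius S" using yA unfolding A_def pseudo_frobenius_def by blast
  thus ?thesis using yA unfolding A_def by blast
qed

theorem theorem3p1:
  fixes S :: "('d::finite \<Rightarrow> nat) set"
  assumes "GNS S"
  shows "tau S \<le> type_gns S \<and>
         (tau S = type_gns S \<longleftrightarrow>
            (\<forall>x\<in>gaps S. \<exists>F\<in>frobenius_allowable S. diff_in F x S))"
proof -
  have sub: "frobenius_allowable S \<subseteq> pseudo_frobenius S" using FA_sub_PF assms .
  have finP: "finite (pseudo_frobenius S)"
  proof (rule finite_subset)
    show "pseudo_frobenius S \<subseteq> UNIV - S" unfolding pseudo_frobenius_def gaps_def by blast
    show "finite (UNIV - S)" using assms unfolding GNS_def by blast
  qed
  have le: "tau S \<le> type_gns S" unfolding tau_def type_gns_def using sub finP by (rule card_mono[rotated])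
  have "tau S = type_gns S \<longleftrightarrow> frobenius_allowable S = pseudo_frobenius S"
    unfolding tau_def type_gns_def using sub finP card_subset_eq[of "pseudo_frobenius S" "frobenius_allowable S"] by auto
  also have "\<dots> \<longleftrightarrow> (\<forall>x\<in>gaps S. \<exists>F\<in>frobenius_allowable S. diff_in F x S)"
  proof
    assume "frobenius_allowable S = pseudo_frobenius S"
    thus "\<forall>x\<in>gaps S. \<exists>F\<in>frobenius_allowable S. diff_in F x S" using exists_PF[OF assms] by simp
  next
    assume H: "\<forall>x\<in>gaps S. \<exists>F\<in>frobenius_allowable S. diff_in F x S"
    have "pseudo_frobenius S \<subseteq> frobenius_allowable S"
    proof
      fix P assume P: "P \<in> pseudo_frobenius S"
      hence Pg: "P \<in> gaps S" unfolding pseudo_frobenius_def by blast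
      then obtain F where F: "F \<in> frobenius_allowable S" "diff_in F P S" using H by blast
      define s where "s = (\<lambda>i. F i - P i)"
      have sS: "s \<in> S" and le: "\<forall>i. P i \<le> F i" using F(2) unfolding diff_in_def s_def by auto
      have Fv: "F = vadd P s" unfolding vadd_def s_def using le by (auto intro!: ext)
      have Fg: "F \<in> gaps S" using F(1) sub unfolding pseudo_frobenius_def by blast
      show "P \<in> frobenius_allowable S"
      proof (cases "s = vzero")
        case True
        hence "F = P" using Fv unfolding vadd_def vzero_def by auto
        thus ?thesis using F by simp
      next
        case False
        hence "F \<in> S" using P sS Fv unfolding pseudo_frobenius_def by blast
        thus ?thesis using Fg unfolding gaps_def by blast
      qed
    qed
    thus "frobenius_allowable S = pseudo_frobenius S" using sub by blast
  qed
  finally show ?thesis using le by blast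
qed

end
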